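(* Let $K=3$ and let $l\ge m\ge s\ge 0$ be integers with $m\ge s+2$. Then \[ h(l,\,m,\,s)\ \le\ h(l-1,\,m-1,\,s+2). \]
   Context: For a vector $\vec n=(n_1,n_2,n_3)$ of nonnegative integers, the following random process is run: stocks start at $\vec n^{(0)}=\vec n$; at each step $t=1,2,\dots$, as long as at least two coordinates of $\vec n^{(t-1)}$ are nonzero, an index $i$ is chosen uniformly at random (independently of the past) among the indices with $n_i^{(t-1)}>0$, and $\vec n^{(t)}=\vec n^{(t-1)}-\vec e_i$ ($\vec e_i$ the $i$-th standard unit vector). The process stops at the first time $T$ at which at most one coordinate is nonzero, and $h(\vec n)=\mathbb{E}[T]$. Equivalently, with $\operatorname{support}(\vec n)=\{i:n_i\ne 0\}$: $h(\vec n)=0$ if $|\operatorname{support}(\vec n)|\le1$, and otherwise $h(\vec n)=1+\frac{1}{|\operatorname{support}(\vec n)|}\sum_{i\in\operatorname{support}(\vec n)}h(\vec n-\vec e_i)$. *)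

theory Defs
  imports Complex_Main
begin

text \<open>Stock vector n = (n1,n2,n3) represented as a function on indices {0,1,2}
 (index i of the paper = i-1 here). support, unit-vector decrement and h as in the paper.\<close>

definition vec3 :: "nat \<Rightarrow> nat \<Rightarrow> nat \<Rightarrow> (nat \<Rightarrow> nat)" where
  "vec3 a b c = (\<lambda>i. if i = 0 then a else if i = 1 then b else if i = 2 then c else 0)"

definition supp3 :: "nat \<times> nat \<times> nat \<Rightarrow> nat set" where
  "supp3 v = {i \<in> {0,1,2}. (case v of (a,b,c) \<Rightarrow> vec3 a b c) i \<noteq> 0}"

definition dec3 :: "nat \<times> nat \<times> nat \<Rightarrow> nat \<Rightarrow> nat \<times> nat \<times> nat" where
  "dec3 v i = (case v of (a,b,c) \<Rightarrow>
      (if i = 0 then a - 1 else a, if i = 1 then b - 1 else b, if i = 2 then c - 1 else c))"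

function h :: "nat \<times> nat \<times> nat \<Rightarrow> real" where
  "h v = (if card (supp3 v) \<le> 1 then 0
          else 1 + (1 / real (card (supp3 v))) * (\<Sum>i\<in>supp3 v. h (dec3 v i)))"
  by auto
termination
proof (relation "measure (\<lambda>(a,b,c). a + b + c)")
  show "wf (measure (\<lambda>(a,b,c). a + b + c))" by simp
next
  fix v :: "nat \<times> nat \<times> nat" and i
  assume "\<not> card (supp3 v) \<le> 1" "i \<in> supp3 v"
  then show "(dec3 v i, v) \<in> measure (\<lambda>(a,b,c). a + b + c)"
    by (cases v) (auto simp: supp3_def dec3_def vec3_def split: if_splits)
qed

end

theory Submission
  imports Defs
begin

lemma h_nonneg: "0 \<le> h v"
proof (induction v rule: h.induct)
  case (1 v)
  show ?case
  proof (cases "card (supp3 v) \<le> 1")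
    case True then show ?thesis by (subst h.simps) (simp del: h.simps)
  next
    case False
    have "0 \<le> (\<Sum>i\<in>supp3 v. h (dec3 v i))" using 1 False by (intro sum_nonneg) (auto simp del: h.simps)
    then show ?thesis using False by (subst h.simps) (simp del: h.simps)
  qed
qed

lemma supp_all: "supp3 (Suc a, Suc b, Suc c) = {0,1,2}"
  by (auto simp: supp3_def vec3_def)

lemma hr3: "h (a+1, b+1, c+1) = 1 + (h (a, b+1, c+1) + h (a+1, b, c+1) + h (a+1, b+1, c)) / 3"
proof -
  have s: "supp3 (Suc a, Suc b, Suc c) = {0,1,2}" by (auto simp: supp3_def vec3_def)
  show ?thesis by (subst h.simps) (simp add: s dec3_def del: h.simps)
qed

lemma hr2a: "h (a+1, b+1, 0) = 1 + (h (a, b+1, 0) + h (a+1, b, 0)) / 2"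
proof -
  have s: "supp3 (Suc a, Suc b, 0) = {0,1}" by (auto simp: supp3_def vec3_def)
  show ?thesis by (subst h.simps) (simp add: s dec3_def del: h.simps)
qed

lemma hr2b: "h (a+1, 0, c+1) = 1 + (h (a, 0, c+1) + h (a+1, 0, c)) / 2"
proof -
  have s: "supp3 (Suc a, 0, Suc c) = {0,2}" by (auto simp: supp3_def vec3_def)
  show ?thesis by (subst h.simps) (simp add: s dec3_def del: h.simps)
qed

lemma hr2c: "h (0, b+1, c+1) = 1 + (h (0, b, c+1) + h (0, b+1, c)) / 2"
proof -
  have s: "supp3 (0, Suc b, Suc c) = {1,2}" by (auto simp: supp3_def vec3_def)
  show ?thesis by (subst h.simps) (simp add: s dec3_def del: h.simps)
qed

lemma hz1: "h (a, 0, 0) = 0"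
proof -
  have "card (supp3 (a, 0, 0)) \<le> 1"
  proof -
    have "supp3 (a,0,0) \<subseteq> {0}" by (auto simp: supp3_def vec3_def)
    then have "card (supp3 (a,0,0)) \<le> card {0::nat}" by (intro card_mono) auto
    then show ?thesis by simp
  qed
  then show ?thesis by (subst h.simps) (simp del: h.simps)
qed

lemma hz: "card (supp3 v) \<le> 1 \<Longrightarrow> h v = 0"
  by (subst h.simps) (simp del: h.simps)

lemma hz2: "h (0, b, 0) = 0"
proof -
  have "supp3 (0,b,0) \<subseteq> {1}" by (auto simp: supp3_def vec3_def)
  then have "card (supp3 (0,b,0)) \<le> card {1::nat}" by (intro card_mono) auto
  then have "card (supp3 (0,b,0)) \<le> 1" by simp
  then show ?thesis by (rule hz)
qed

lemma hz3: "h (0, 0, c) = 0"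
proof -
  have "supp3 (0,0,c) \<subseteq> {2}" by (auto simp: supp3_def vec3_def)
  then have "card (supp3 (0,0,c)) \<le> card {2::nat}" by (intro card_mono) auto
  then have "card (supp3 (0,0,c)) \<le> 1" by simp
  then show ?thesis by (rule hz)
qed

lemma hr3S: "h (Suc a, Suc b, Suc c) = 1 + (h (a, Suc b, Suc c) + h (Suc a, b, Suc c) + h (Suc a, Suc b, c)) / 3"
  using hr3[of a b c] by simp
lemma hr2aS: "h (Suc a, Suc b, 0) = 1 + (h (a, Suc b, 0) + h (Suc a, b, 0)) / 2"
  using hr2a[of a b] by simp
lemma hr2bS: "h (Suc a, 0, Suc c) = 1 + (h (a, 0, Suc c) + h (Suc a, 0, c)) / 2"
  using hr2b[of a c] by simp
lemma hr2cS: "h (0, Suc b, Suc c) = 1 + (h (0, b, Suc c) + h (0, Suc b, c)) / 2"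
  using hr2c[of b c] by simp

lemma hsym_aux: "h (a,b,c) = h (b,a,c) \<and> h (a,b,c) = h (a,c,b)"
proof (induction "a+b+c" arbitrary: a b c rule: less_induct)
  case less
  then show ?case
    by (cases a; cases b; cases c) (simp_all add: hr3S hr2aS hr2bS hr2cS hz1 hz2 hz3 del: h.simps)
qed


declare h.simps[simp del]

lemma s12: "h (a,b,c) = h (b,a,c)" using hsym_aux by blast
lemma s23: "h (a,b,c) = h (a,c,b)" using hsym_aux by blast
lemma s13: "h (a,b,c) = h (c,b,a)" using s12[of a b c] s23[of b a c] s12[of b c a] by linarith
lemma s_cyc: "h (a,b,c) = h (b,c,a)" using s12[of a b c] s23[of b a c] by linarith

definition TT :: "nat \<Rightarrow> bool" where
  "TT n \<longleftrightarrow> (\<forall>a b c. a+b+c+1 \<le> n \<longrightarrow> b \<le> a+1 \<longrightarrow> c+1 \<le> a \<longrightarrow> h (a+1,b,c) \<le> h (a,b,c+1))"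
definition QQ :: "nat \<Rightarrow> bool" where
  "QQ n \<longleftrightarrow> (\<forall>a b c. a+b+c+2 \<le> n \<longrightarrow> c \<le> a \<longrightarrow> c \<le> b \<longrightarrow> 2 * h (a+1,b+1,c) \<le> h (a,b+1,c+1) + h (a+1,b,c+1))"
definition RR :: "nat \<Rightarrow> bool" where
  "RR n \<longleftrightarrow> (\<forall>a b c. a+b+c+1 \<le> n \<longrightarrow> c \<le> a \<longrightarrow> c \<le> b \<longrightarrow> h (a,b+1,c) + h (a+1,b,c) \<le> 2 * h (a,b,c+1))"
definition BB :: "nat \<Rightarrow> bool" where
  "BB n \<longleftrightarrow> (\<forall>a b c. a+b+c+2 \<le> n \<longrightarrow> c+1 \<le> a \<longrightarrow> c+1 \<le> b \<longrightarrow> h (a+1,b+1,c) \<le> h (a,b,c+2))"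

lemma TTD: "TT n \<Longrightarrow> a+b+c+1 \<le> n \<Longrightarrow> b \<le> a+1 \<Longrightarrow> c+1 \<le> a \<Longrightarrow> h (a+1,b,c) \<le> h (a,b,c+1)"
  unfolding TT_def by blast
lemma QQD: "QQ n \<Longrightarrow> a+b+c+2 \<le> n \<Longrightarrow> c \<le> a \<Longrightarrow> c \<le> b \<Longrightarrow> 2 * h (a+1,b+1,c) \<le> h (a,b+1,c+1) + h (a+1,b,c+1)"
  unfolding QQ_def by blast
lemma RRD: "RR n \<Longrightarrow> a+b+c+1 \<le> n \<Longrightarrow> c \<le> a \<Longrightarrow> c \<le> b \<Longrightarrow> h (a,b+1,c) + h (a+1,b,c) \<le> 2 * h (a,b,c+1)"
  unfolding RR_def by blast
lemma BBD: "BB n \<Longrightarrow> a+b+c+2 \<le> n \<Longrightarrow> c+1 \<le> a \<Longrightarrow> c+1 \<le> b \<Longrightarrow> h (a+1,b+1,c) \<le> h (a,b,c+2)"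
  unfolding BB_def by blast



lemma hr3m: "3 * h (a+1, b+1, c+1) = 3 + h (a, b+1, c+1) + h (a+1, b, c+1) + h (a+1, b+1, c)"
  using hr3[of a b c] by simp
lemma hr2am: "2 * h (a+1, b+1, 0) = 2 + h (a, b+1, 0) + h (a+1, b, 0)"
  using hr2a[of a b] by simp
lemma hr2bm: "2 * h (a+1, 0, c+1) = 2 + h (a, 0, c+1) + h (a+1, 0, c)"
  using hr2b[of a c] by simp
lemma g1: "h (x,1,0) \<le> 2"
proof (induction x)
  case 0 then show ?case by (simp add: hz2)
next
  case (Suc x)
  have "h (x+1,0+1,0) = 1 + (h (x,0+1,0) + h (x+1,0,0)) / 2" by (rule hr2a)
  then show ?case using Suc hz1[of "x+1"] by (simp add: numeral_eq_Suc)
qed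

lemma C2: "h (x,y+2,0) + h (x+2,y,0) \<le> 2 * h (x+1,y+1,0)"
proof (induction "x+y" arbitrary: x y rule: less_induct)
  case less
  show ?case
  proof (cases x)
    case 0
    show ?thesis
    proof (cases y)
      case 0
      then show ?thesis using \<open>x=0\<close> h_nonneg[of "(1,1,0)"] by (simp add: hz1 hz2)
    next
      case (Suc y')
      have e1: "2 * h (2,y'+1,0) = 2 + h (1,y'+1,0) + h (2,y',0)" using hr2am[of 1 y'] by (simp add: numeral_eq_Suc)
      have e2: "2 * h (1,y'+2,0) = 2 + h (0,y'+2,0) + h (1,y'+1,0)" using hr2am[of 0 "y'+1"] by (simp add: numeral_eq_Suc)
      have z: "h (0,y'+2,0) = 0" "h (0,y'+3,0) = 0" by (simp_all add: hz2)
      have ih: "h (0,y'+2,0) + h (2,y',0) \<le> 2 * h (1,y'+1,0)" using less[of 0 y'] \<open>x=0\<close> Suc by (simp add: numeral_eq_Suc)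
      have b: "h (1,y'+1,0) \<le> 2" using g1[of "y'+1"] s12[of 1 "y'+1" 0] by (simp add: numeral_eq_Suc)
      have "h (0,y'+3,0) + h (2,y'+1,0) \<le> 2 * h (1,y'+2,0)" using e1 e2 z ih b by linarith
      then show ?thesis using \<open>x=0\<close> Suc by (simp add: numeral_eq_Suc)
    qed
  next
    case (Suc x')
    show ?thesis
    proof (cases y)
      case 0
      have e1: "2 * h (x'+1,2,0) = 2 + h (x',2,0) + h (x'+1,1,0)" using hr2am[of x' 1] by (simp add: numeral_eq_Suc)
      have e2: "2 * h (x'+2,1,0) = 2 + h (x'+1,1,0) + h (x'+2,0,0)" using hr2am[of "x'+1" 0] by (simp add: numeral_eq_Suc)
      have z: "h (x'+2,0,0) = 0" "h (x'+3,0,0) = 0" by (simp_all add: hz1)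
      have ih: "h (x',2,0) + h (x'+2,0,0) \<le> 2 * h (x'+1,1,0)" using less[of x' 0] Suc \<open>y=0\<close> by (simp add: numeral_eq_Suc)
      have b: "h (x'+1,1,0) \<le> 2" using g1[of "x'+1"] by (simp add: numeral_eq_Suc)
      have "h (x'+1,2,0) + h (x'+3,0,0) \<le> 2 * h (x'+2,1,0)" using e1 e2 z ih b by linarith
      then show ?thesis using \<open>y=0\<close> Suc by (simp add: numeral_eq_Suc)
    next
      case (Suc y')
      have e1: "2 * h (x'+1,y'+3,0) = 2 + h (x',y'+3,0) + h (x'+1,y'+2,0)" using hr2am[of x' "y'+2"] by (simp add: numeral_eq_Suc)
      have e2: "2 * h (x'+3,y'+1,0) = 2 + h (x'+2,y'+1,0) + h (x'+3,y',0)" using hr2am[of "x'+2" y'] by (simp add: numeral_eq_Suc)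
      have e3: "2 * h (x'+2,y'+2,0) = 2 + h (x'+1,y'+2,0) + h (x'+2,y'+1,0)" using hr2am[of "x'+1" "y'+1"] by (simp add: numeral_eq_Suc)
      have i1: "h (x',y'+3,0) + h (x'+2,y'+1,0) \<le> 2 * h (x'+1,y'+2,0)" using less[of x' "y'+1"] \<open>x = Suc x'\<close> Suc by (simp add: numeral_eq_Suc)
      have i2: "h (x'+1,y'+2,0) + h (x'+3,y',0) \<le> 2 * h (x'+2,y'+1,0)" using less[of "x'+1" y'] \<open>x = Suc x'\<close> Suc by (simp add: numeral_eq_Suc)
      have "h (x'+1,y'+3,0) + h (x'+3,y'+1,0) \<le> 2 * h (x'+2,y'+2,0)" using e1 e2 e3 i1 i2 by linarith
      then show ?thesis using \<open>x = Suc x'\<close> Suc by (simp add: numeral_eq_Suc)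
    qed
  qed
qed

lemma stepT: assumes IT: "TT n" and IQ: "QQ n" shows "TT (Suc n)"
  unfolding TT_def
proof (intro allI impI)
  fix a b c assume lv: "a+b+c+1 \<le> Suc n" and c1: "b \<le> a+1" and c2: "c+1 \<le> a"
  obtain a' where a': "a = a'+1" using c2 by (cases a) auto
  show "h (a+1,b,c) \<le> h (a,b,c+1)"
  proof (cases b)
    case 0
    show ?thesis
    proof (cases c)
      case 0
      then show ?thesis using \<open>b=0\<close> hz1[of "a+1"] h_nonneg[of "(a,0,0+1)"] by simp
    next
      case (Suc c')
      have e1: "2 * h (a'+2,0,c'+1) = 2 + h (a'+1,0,c'+1) + h (a'+2,0,c')" using hr2bm[of "a'+1" c'] by (simp add: numeral_eq_Suc)
      have e2: "2 * h (a'+1,0,c'+2) = 2 + h (a',0,c'+2) + h (a'+1,0,c'+1)" using hr2bm[of a' "c'+1"] by (simp add: numeral_eq_Suc)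
      have f1: "h (a'+2,0,c') \<le> h (a'+1,0,c'+1)" using TTD[OF IT, of "a'+1" 0 c'] lv c2 a' Suc \<open>b=0\<close> by (simp add: numeral_eq_Suc)
      have f2: "h (a'+1,0,c'+1) \<le> h (a',0,c'+2)"
      proof (cases "c'+2 \<le> a'")
        case True then show ?thesis using TTD[OF IT, of a' 0 "c'+1"] lv a' Suc \<open>b=0\<close> by (simp add: numeral_eq_Suc)
      next
        case False then have "a' = c'+1" using c2 a' Suc by simp
        then show ?thesis using s13[of "c'+2" 0 "c'+1"] by (simp add: numeral_eq_Suc)
      qed
      have "h (a'+2,0,c'+1) \<le> h (a'+1,0,c'+2)" using e1 e2 f1 f2 by linarith
      then show ?thesis using a' Suc \<open>b=0\<close> by (simp add: numeral_eq_Suc)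
    qed
  next
    case (Suc b')
    show ?thesis
    proof (cases c)
      case 0
      have e1: "2 * h (a'+2,b'+1,0) = 2 + h (a'+1,b'+1,0) + h (a'+2,b',0)" using hr2am[of "a'+1" b'] by (simp add: numeral_eq_Suc)
      have e2: "3 * h (a'+1,b'+1,1) = 3 + h (a',b'+1,1) + h (a'+1,b',1) + h (a'+1,b'+1,0)" using hr3m[of a' b' 0] by (simp add: numeral_eq_Suc)
      have fY2: "h (a'+2,b',0) \<le> h (a'+1,b',1)" using TTD[OF IT, of "a'+1" b' 0] lv c1 a' Suc \<open>c=0\<close> by (simp add: numeral_eq_Suc)
      have "h (a'+2,b'+1,0) \<le> h (a'+1,b'+1,1)"
      proof (cases "b' \<le> a'")
        case True
        show ?thesis
        proof (cases a')
          case 0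
          then have "b' = 0" using True by simp
          have x1: "h (a'+1,b'+1,0) = h (a',b'+1,1)" using s13[of 1 1 0] \<open>a'=0\<close> \<open>b'=0\<close> by simp
          have x2: "h (a'+2,b',0) = 0" using hz1 \<open>b'=0\<close> by simp
          have x3: "0 \<le> h (a'+1,b'+1,0)" by (rule h_nonneg)
          show ?thesis using e1 e2 fY2 x1 x2 x3 by linarith
        next
          case (Suc a'')
          have fYX: "h (a'+2,b',0) \<le> h (a'+1,b'+1,0)"
            using TTD[OF IT, of "a'+1" 0 b'] s23[of "a'+2" b' 0] s23[of "a'+1" "b'+1" 0] lv True a' \<open>b = Suc b'\<close> \<open>c=0\<close>
            by (simp add: numeral_eq_Suc)
          have fXW: "h (a'+1,b'+1,0) \<le> h (a',b'+1,1)"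
            using TTD[OF IT, of a' "b'+1" 0] lv True a' \<open>b = Suc b'\<close> \<open>c=0\<close> Suc by (simp add: numeral_eq_Suc)
          show ?thesis using e1 e2 fY2 fYX fXW by linarith
        qed
      next
        case False
        then have bb: "b' = a'+1" using c1 a' Suc by simp
        have x1: "h (a'+1,b'+1,0) = h (a'+2,b',0)" using s12[of "a'+1" "a'+2" 0] bb by (simp add: numeral_eq_Suc)
        have q: "2 * h (a'+1,b'+1,0) \<le> h (a',b'+1,1) + h (a'+1,b',1)"
          using QQD[OF IQ, of a' "a'+1" 0] bb lv a' Suc \<open>c=0\<close> by (simp add: numeral_eq_Suc)
        show ?thesis using e1 e2 fY2 x1 q by linarith
      qed
      then show ?thesis using a' Suc \<open>c=0\<close> by (simp add: numeral_eq_Suc)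
    next
      case (Suc c')
      have e1: "3 * h (a'+2,b'+1,c'+1) = 3 + h (a'+1,b'+1,c'+1) + h (a'+2,b',c'+1) + h (a'+2,b'+1,c')" using hr3m[of "a'+1" b' c'] by (simp add: numeral_eq_Suc)
      have e2: "3 * h (a'+1,b'+1,c'+2) = 3 + h (a',b'+1,c'+2) + h (a'+1,b',c'+2) + h (a'+1,b'+1,c'+1)" using hr3m[of a' b' "c'+1"] by (simp add: numeral_eq_Suc)
      have f3: "h (a'+2,b'+1,c') \<le> h (a'+1,b'+1,c'+1)" using TTD[OF IT, of "a'+1" "b'+1" c'] lv c1 c2 a' Suc \<open>b = Suc b'\<close> by (simp add: numeral_eq_Suc)
      have f2: "h (a'+2,b',c'+1) \<le> h (a'+1,b',c'+2)" using TTD[OF IT, of "a'+1" b' "c'+1"] lv c1 c2 a' Suc \<open>b = Suc b'\<close> by (simp add: numeral_eq_Suc)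
      have "h (a'+2,b'+1,c'+1) \<le> h (a'+1,b'+1,c'+2)"
      proof (cases "b' \<le> a'")
        case True
        show ?thesis
        proof (cases "c'+2 \<le> a'")
          case True
          have f1: "h (a'+1,b'+1,c'+1) \<le> h (a',b'+1,c'+2)" using TTD[OF IT, of a' "b'+1" "c'+1"] lv \<open>b' \<le> a'\<close> True a' Suc \<open>b = Suc b'\<close> by (simp add: numeral_eq_Suc)
          show ?thesis using e1 e2 f1 f2 f3 by linarith
        next
          case False
          then have "a' = c'+1" using c2 a' Suc by simp
          then have f1: "h (a'+1,b'+1,c'+1) = h (a',b'+1,c'+2)" using s13[of "c'+2" "b'+1" "c'+1"] by (simp add: numeral_eq_Suc)
          show ?thesis using e1 e2 f1 f2 f3 by linarith
        qed
      next
        case False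
        then have bb: "b' = a'+1" using c1 a' \<open>b = Suc b'\<close> by simp
        have x1: "h (a'+1,b'+1,c'+1) = h (a'+2,b',c'+1)" using s12[of "a'+1" "a'+2" "c'+1"] bb by (simp add: numeral_eq_Suc)
        have q: "2 * h (a'+1,b'+1,c'+1) \<le> h (a',b'+1,c'+2) + h (a'+1,b',c'+2)"
          using QQD[OF IQ, of a' "a'+1" "c'+1"] bb lv c2 a' Suc \<open>b = Suc b'\<close> by (simp add: numeral_eq_Suc)
        show ?thesis using e1 e2 f3 x1 q by linarith
      qed
      then show ?thesis using a' Suc \<open>b = Suc b'\<close> by (simp add: numeral_eq_Suc)
    qed
  qed
qed

lemma stepQ: assumes IT: "TT (Suc n)" and IQ: "QQ n" shows "QQ (Suc n)"
  unfolding QQ_def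
proof (intro allI impI)
  fix a b c assume lv: "a+b+c+2 \<le> Suc n" and c1: "c \<le> a" and c2: "c \<le> b"
  show "2 * h (a+1,b+1,c) \<le> h (a,b+1,c+1) + h (a+1,b,c+1)"
  proof (cases "a = c")
    case True
    show ?thesis
    proof (cases "c+1 \<le> b")
      case bc: True
      have fT: "h (b+1,c+1,c) \<le> h (b,c+1,c+1)" using TTD[OF IT, of b "c+1" c] lv True bc by simp
      have p1: "h (c,b+1,c+1) = h (c+1,b+1,c)" by (rule s13)
      have p2: "h (c+1,b+1,c) = h (b+1,c+1,c)" by (rule s12)
      have p3: "h (c+1,b,c+1) = h (b,c+1,c+1)" by (rule s12)
      show ?thesis using True fT p1 p2 p3 by simp
    next
      case False
      then have "b = c" using c2 by simp
      have p1: "h (c,c+1,c+1) = h (c+1,c+1,c)" by (rule s13)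
      have p2: "h (c+1,c,c+1) = h (c+1,c+1,c)" by (rule s23)
      show ?thesis using True \<open>b=c\<close> p1 p2 by simp
    qed
  next
    case anc: False
    show ?thesis
    proof (cases "b = c")
      case True
      have fT: "h (a+1,c+1,c) \<le> h (a,c+1,c+1)" using TTD[OF IT, of a "c+1" c] lv True c1 anc by simp
      have p: "h (a+1,c,c+1) = h (a+1,c+1,c)" by (rule s23)
      show ?thesis using True fT p by simp
    next
      case bnc: False
      obtain a' where a': "a = a'+1" using c1 anc by (cases a) auto
      obtain b' where b': "b = b'+1" using c2 bnc by (cases b) auto
      show ?thesis
      proof (cases c)
        case 0
        have e1: "2 * h (a'+2,b'+2,0) = 2 + h (a'+1,b'+2,0) + h (a'+2,b'+1,0)" using hr2am[of "a'+1" "b'+1"] by (simp add: numeral_eq_Suc)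
        have e2: "3 * h (a'+1,b'+2,1) = 3 + h (a',b'+2,1) + h (a'+1,b'+1,1) + h (a'+1,b'+2,0)" using hr3m[of a' "b'+1" 0] by (simp add: numeral_eq_Suc)
        have e3: "3 * h (a'+2,b'+1,1) = 3 + h (a'+1,b'+1,1) + h (a'+2,b',1) + h (a'+2,b'+1,0)" using hr3m[of "a'+1" b' 0] by (simp add: numeral_eq_Suc)
        have q1: "2 * h (a'+1,b'+2,0) \<le> h (a',b'+2,1) + h (a'+1,b'+1,1)" using QQD[OF IQ, of a' "b'+1" 0] lv a' b' 0 by (simp add: numeral_eq_Suc)
        have q2: "2 * h (a'+2,b'+1,0) \<le> h (a'+1,b'+1,1) + h (a'+2,b',1)" using QQD[OF IQ, of "a'+1" b' 0] lv a' b' 0 by (simp add: numeral_eq_Suc)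
        have "2 * h (a'+2,b'+2,0) \<le> h (a'+1,b'+2,1) + h (a'+2,b'+1,1)" using e1 e2 e3 q1 q2 by linarith
        then show ?thesis using a' b' 0 by (simp add: numeral_eq_Suc)
      next
        case (Suc c')
        have e1: "3 * h (a'+2,b'+2,c'+1) = 3 + h (a'+1,b'+2,c'+1) + h (a'+2,b'+1,c'+1) + h (a'+2,b'+2,c')" using hr3m[of "a'+1" "b'+1" c'] by (simp add: numeral_eq_Suc)
        have e2: "3 * h (a'+1,b'+2,c'+2) = 3 + h (a',b'+2,c'+2) + h (a'+1,b'+1,c'+2) + h (a'+1,b'+2,c'+1)" using hr3m[of a' "b'+1" "c'+1"] by (simp add: numeral_eq_Suc)
        have e3: "3 * h (a'+2,b'+1,c'+2) = 3 + h (a'+1,b'+1,c'+2) + h (a'+2,b',c'+2) + h (a'+2,b'+1,c'+1)" using hr3m[of "a'+1" b' "c'+1"] by (simp add: numeral_eq_Suc)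
        have q1: "2 * h (a'+2,b'+2,c') \<le> h (a'+1,b'+2,c'+1) + h (a'+2,b'+1,c'+1)" using QQD[OF IQ, of "a'+1" "b'+1" c'] lv a' b' Suc c1 c2 by (simp add: numeral_eq_Suc)
        have q2: "2 * h (a'+1,b'+2,c'+1) \<le> h (a',b'+2,c'+2) + h (a'+1,b'+1,c'+2)" using QQD[OF IQ, of a' "b'+1" "c'+1"] lv a' b' Suc c1 c2 anc bnc by (simp add: numeral_eq_Suc)
        have q3: "2 * h (a'+2,b'+1,c'+1) \<le> h (a'+1,b'+1,c'+2) + h (a'+2,b',c'+2)" using QQD[OF IQ, of "a'+1" b' "c'+1"] lv a' b' Suc c1 c2 anc bnc by (simp add: numeral_eq_Suc)
        have "2 * h (a'+2,b'+2,c'+1) \<le> h (a'+1,b'+2,c'+2) + h (a'+2,b'+1,c'+2)" using e1 e2 e3 q1 q2 q3 by linarith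
        then show ?thesis using a' b' Suc by (simp add: numeral_eq_Suc)
      qed
    qed
  qed
qed

lemma stepR: assumes IT: "TT (Suc n)" and IR: "RR n" shows "RR (Suc n)"
  unfolding RR_def
proof (intro allI impI)
  fix a b c assume lv: "a+b+c+1 \<le> Suc n" and c1: "c \<le> a" and c2: "c \<le> b"
  show "h (a,b+1,c) + h (a+1,b,c) \<le> 2 * h (a,b,c+1)"
  proof (cases "a = c")
    case True
    have p0: "h (c+1,b,c) = h (c,b,c+1)" by (rule s13)
    show ?thesis
    proof (cases "c+1 \<le> b")
      case bc: True
      have fT: "h (b+1,c,c) \<le> h (b,c,c+1)" using TTD[OF IT, of b c c] lv True bc by simp
      have p1: "h (c,b+1,c) = h (b+1,c,c)" by (rule s12)
      have p2: "h (c,b,c+1) = h (b,c,c+1)" by (rule s12)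
      show ?thesis using True fT p0 p1 p2 by simp
    next
      case False
      then have "b = c" using c2 by simp
      have p1: "h (c,c+1,c) = h (c,c,c+1)" by (rule s23)
      show ?thesis using True \<open>b=c\<close> p0 p1 by simp
    qed
  next
    case anc: False
    show ?thesis
    proof (cases "b = c")
      case True
      have fT: "h (a+1,c,c) \<le> h (a,c,c+1)" using TTD[OF IT, of a c c] lv True c1 anc by simp
      have p: "h (a,c+1,c) = h (a,c,c+1)" by (rule s23)
      show ?thesis using True fT p by simp
    next
      case bnc: False
      obtain a' where a': "a = a'+1" using c1 anc by (cases a) auto
      obtain b' where b': "b = b'+1" using c2 bnc by (cases b) auto
      show ?thesis
      proof (cases c)
        case 0
        have e1: "2 * h (a'+1,b'+2,0) = 2 + h (a',b'+2,0) + h (a'+1,b'+1,0)" using hr2am[of a' "b'+1"] by (simp add: numeral_eq_Suc)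
        have e2: "2 * h (a'+2,b'+1,0) = 2 + h (a'+1,b'+1,0) + h (a'+2,b',0)" using hr2am[of "a'+1" b'] by (simp add: numeral_eq_Suc)
        have e3: "3 * h (a'+1,b'+1,1) = 3 + h (a',b'+1,1) + h (a'+1,b',1) + h (a'+1,b'+1,0)" using hr3m[of a' b' 0] by (simp add: numeral_eq_Suc)
        have r1: "h (a',b'+2,0) + h (a'+1,b'+1,0) \<le> 2 * h (a',b'+1,1)" using RRD[OF IR, of a' "b'+1" 0] lv a' b' 0 by (simp add: numeral_eq_Suc)
        have r2: "h (a'+1,b'+1,0) + h (a'+2,b',0) \<le> 2 * h (a'+1,b',1)" using RRD[OF IR, of "a'+1" b' 0] lv a' b' 0 by (simp add: numeral_eq_Suc)
        have cc: "h (a',b'+2,0) + h (a'+2,b',0) \<le> 2 * h (a'+1,b'+1,0)" by (rule C2)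
        have "h (a'+1,b'+2,0) + h (a'+2,b'+1,0) \<le> 2 * h (a'+1,b'+1,1)" using e1 e2 e3 r1 r2 cc by linarith
        then show ?thesis using a' b' 0 by (simp add: numeral_eq_Suc)
      next
        case (Suc c')
        have e1: "3 * h (a'+1,b'+2,c'+1) = 3 + h (a',b'+2,c'+1) + h (a'+1,b'+1,c'+1) + h (a'+1,b'+2,c')" using hr3m[of a' "b'+1" c'] by (simp add: numeral_eq_Suc)
        have e2: "3 * h (a'+2,b'+1,c'+1) = 3 + h (a'+1,b'+1,c'+1) + h (a'+2,b',c'+1) + h (a'+2,b'+1,c')" using hr3m[of "a'+1" b' c'] by (simp add: numeral_eq_Suc)
        have e3: "3 * h (a'+1,b'+1,c'+2) = 3 + h (a',b'+1,c'+2) + h (a'+1,b',c'+2) + h (a'+1,b'+1,c'+1)" using hr3m[of a' b' "c'+1"] by (simp add: numeral_eq_Suc)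
        have r1: "h (a'+1,b'+2,c') + h (a'+2,b'+1,c') \<le> 2 * h (a'+1,b'+1,c'+1)" using RRD[OF IR, of "a'+1" "b'+1" c'] lv a' b' Suc c1 c2 by (simp add: numeral_eq_Suc)
        have r2: "h (a',b'+2,c'+1) + h (a'+1,b'+1,c'+1) \<le> 2 * h (a',b'+1,c'+2)" using RRD[OF IR, of a' "b'+1" "c'+1"] lv a' b' Suc c1 c2 anc bnc by (simp add: numeral_eq_Suc)
        have r3: "h (a'+1,b'+1,c'+1) + h (a'+2,b',c'+1) \<le> 2 * h (a'+1,b',c'+2)" using RRD[OF IR, of "a'+1" b' "c'+1"] lv a' b' Suc c1 c2 anc bnc by (simp add: numeral_eq_Suc)
        have "h (a'+1,b'+2,c'+1) + h (a'+2,b'+1,c'+1) \<le> 2 * h (a'+1,b'+1,c'+2)" using e1 e2 e3 r1 r2 r3 by linarith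
        then show ?thesis using a' b' Suc by (simp add: numeral_eq_Suc)
      qed
    qed
  qed
qed

lemma stepB: assumes IT: "TT n" and IB: "BB n" and IR: "RR n" shows "BB (Suc n)"
  unfolding BB_def
proof (intro allI impI)
  fix a b c assume lv: "a+b+c+2 \<le> Suc n" and c1: "c+1 \<le> a" and c2: "c+1 \<le> b"
  obtain a' where a': "a = a'+1" using c1 by (cases a) auto
  obtain b' where b': "b = b'+1" using c2 by (cases b) auto
  show "h (a+1,b+1,c) \<le> h (a,b,c+2)"
  proof (cases c)
    case 0
    have e1: "2 * h (a'+2,b'+2,0) = 2 + h (a'+1,b'+2,0) + h (a'+2,b'+1,0)" using hr2am[of "a'+1" "b'+1"] by (simp add: numeral_eq_Suc)
    have e2: "3 * h (a'+1,b'+1,2) = 3 + h (a',b'+1,2) + h (a'+1,b',2) + h (a'+1,b'+1,1)" using hr3m[of a' b' 1] by (simp add: numeral_eq_Suc)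
    have fX: "h (a'+1,b'+2,0) \<le> h (a',b'+1,2)"
    proof (cases a')
      case (Suc a'')
      then show ?thesis using BBD[OF IB, of a' "b'+1" 0] lv a' b' \<open>c=0\<close> by (simp add: numeral_eq_Suc)
    next
      case 0
      show ?thesis
      proof (cases b')
        case 0
        then show ?thesis using s_cyc[of 0 1 2] \<open>a'=0\<close> by (simp add: numeral_eq_Suc)
      next
        case (Suc b'')
        have t: "h (b'+2,0,1) \<le> h (b'+1,0,2)" using TTD[OF IT, of "b'+1" 0 1] lv a' b' \<open>c=0\<close> \<open>a'=0\<close> Suc by (simp add: numeral_eq_Suc)
        have p1: "h (1,b'+2,0) = h (b'+2,0,1)" by (rule s_cyc)
        have p2: "h (0,b'+1,2) = h (b'+1,0,2)" by (rule s12)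
        show ?thesis using t p1 p2 \<open>a'=0\<close> by simp
      qed
    qed
    have fY: "h (a'+2,b'+1,0) \<le> h (a'+1,b',2)"
    proof (cases b')
      case (Suc b'')
      then show ?thesis using BBD[OF IB, of "a'+1" b' 0] lv a' b' \<open>c=0\<close> by (simp add: numeral_eq_Suc)
    next
      case 0
      show ?thesis
      proof (cases a')
        case 0
        then show ?thesis using s_cyc[of 2 1 0] \<open>b'=0\<close> by (simp add: numeral_eq_Suc)
      next
        case (Suc a'')
        have t: "h (a'+2,0,1) \<le> h (a'+1,0,2)" using TTD[OF IT, of "a'+1" 0 1] lv a' b' \<open>c=0\<close> \<open>b'=0\<close> Suc by (simp add: numeral_eq_Suc)
        have p1: "h (a'+2,1,0) = h (a'+2,0,1)" by (rule s23)
        show ?thesis using t p1 \<open>b'=0\<close> by simp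
      qed
    qed
    have fR: "h (a'+1,b'+2,0) + h (a'+2,b'+1,0) \<le> 2 * h (a'+1,b'+1,1)" using RRD[OF IR, of "a'+1" "b'+1" 0] lv a' b' \<open>c=0\<close> by (simp add: numeral_eq_Suc)
    have "h (a'+2,b'+2,0) \<le> h (a'+1,b'+1,2)" using e1 e2 fX fY fR by linarith
    then show ?thesis using a' b' \<open>c=0\<close> by (simp add: numeral_eq_Suc)
  next
    case (Suc c')
    have e1: "3 * h (a'+2,b'+2,c'+1) = 3 + h (a'+1,b'+2,c'+1) + h (a'+2,b'+1,c'+1) + h (a'+2,b'+2,c')" using hr3m[of "a'+1" "b'+1" c'] by (simp add: numeral_eq_Suc)
    have e2: "3 * h (a'+1,b'+1,c'+3) = 3 + h (a',b'+1,c'+3) + h (a'+1,b',c'+3) + h (a'+1,b'+1,c'+2)" using hr3m[of a' b' "c'+2"] by (simp add: numeral_eq_Suc)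
    have f3: "h (a'+2,b'+2,c') \<le> h (a'+1,b'+1,c'+2)" using BBD[OF IB, of "a'+1" "b'+1" c'] lv a' b' Suc c1 c2 by (simp add: numeral_eq_Suc)
    have f1: "h (a'+1,b'+2,c'+1) \<le> h (a',b'+1,c'+3)"
    proof (cases "c'+2 \<le> a'")
      case True
      then show ?thesis using BBD[OF IB, of a' "b'+1" "c'+1"] lv a' b' Suc c1 c2 by (simp add: numeral_eq_Suc)
    next
      case False
      then have aa: "a' = c'+1" using c1 a' Suc by simp
      show ?thesis
      proof (cases "c'+2 \<le> b'")
        case True
        have t: "h (b'+2,c'+1,c'+2) \<le> h (b'+1,c'+1,c'+3)" using TTD[OF IT, of "b'+1" "c'+1" "c'+2"] lv a' b' Suc aa True by (simp add: numeral_eq_Suc)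
        have p1: "h (c'+2,b'+2,c'+1) = h (b'+2,c'+1,c'+2)" by (rule s_cyc)
        have p2: "h (c'+1,b'+1,c'+3) = h (b'+1,c'+1,c'+3)" by (rule s12)
        show ?thesis using t p1 p2 aa by (simp add: numeral_eq_Suc)
      next
        case False
        then have bb: "b' = c'+1" using c2 b' Suc by simp
        have p: "h (c'+1,c'+2,c'+3) = h (c'+2,c'+3,c'+1)" by (rule s_cyc)
        show ?thesis using p aa bb by (simp add: numeral_eq_Suc)
      qed
    qed
    have f2: "h (a'+2,b'+1,c'+1) \<le> h (a'+1,b',c'+3)"
    proof (cases "c'+2 \<le> b'")
      case True
      then show ?thesis using BBD[OF IB, of "a'+1" b' "c'+1"] lv a' b' Suc c1 c2 by (simp add: numeral_eq_Suc)
    next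
      case False
      then have bb: "b' = c'+1" using c2 b' Suc by simp
      show ?thesis
      proof (cases "c'+2 \<le> a'")
        case True
        have t: "h (a'+2,c'+1,c'+2) \<le> h (a'+1,c'+1,c'+3)" using TTD[OF IT, of "a'+1" "c'+1" "c'+2"] lv a' b' Suc bb True by (simp add: numeral_eq_Suc)
        have p1: "h (a'+2,c'+2,c'+1) = h (a'+2,c'+1,c'+2)" by (rule s23)
        show ?thesis using t p1 bb by (simp add: numeral_eq_Suc)
      next
        case False
        then have aa: "a' = c'+1" using c1 a' Suc by simp
        have p: "h (c'+3,c'+2,c'+1) = h (c'+2,c'+1,c'+3)" by (rule s_cyc)
        show ?thesis using p aa bb by (simp add: numeral_eq_Suc)
      qed
    qed
    have "h (a'+2,b'+2,c'+1) \<le> h (a'+1,b'+1,c'+3)" using e1 e2 f1 f2 f3 by linarith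
    then show ?thesis using a' b' Suc by (simp add: numeral_eq_Suc)
  qed
qed

lemma allfam: "TT n \<and> QQ n \<and> RR n \<and> BB n"
proof (induction n)
  case 0
  show ?case unfolding TT_def QQ_def RR_def BB_def by simp
next
  case (Suc n)
  then have T: "TT n" and Q: "QQ n" and R: "RR n" and B: "BB n" by auto
  have T': "TT (Suc n)" using stepT[OF T Q] .
  show ?case using T' stepQ[OF T' Q] stepR[OF T' R] stepB[OF T B R] by blast
qed

theorem lemma5:
  fixes l m s :: nat
  assumes "l \<ge> m" and "m \<ge> s" and "m \<ge> s + 2"
  shows "h (l, m, s) \<le> h (l - 1, m - 1, s + 2)"
proof (cases "s + 3 \<le> m")
  case True
  have "BB (l+m+s)" using allfam by blast
  from BBD[OF this, of "l-1" "m-1" s] assms True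
  show ?thesis by simp
next
  case False
  then have ms: "m = s+2" using assms by simp
  have "TT (l+m+s)" using allfam by blast
  from TTD[OF this, of "l-1" "s+2" s] assms ms
  have "h (l, s+2, s) \<le> h (l-1, s+2, s+1)" by simp
  moreover have "h (l-1, s+2, s+1) = h (l-1, s+1, s+2)" by (rule s23)
  ultimately show ?thesis using ms by (simp add: numeral_eq_Suc)
qed

end
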